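(* If $H$ is a breakable monoid, then $\mathcal{P}_{\mathrm{fin},1}(H)$ is UmF.
   Context: A monoid $H$ is breakable if $xy\in\{x,y\}$ for all $x,y\in H$. $\mathcal{P}_{\mathrm{fin},1}(H)$ denotes the set of non-empty finite subsets of $H$ containing $1_H$, a monoid under $XY=\{xy:x\in X,y\in Y\}$. In a monoid $M$: $x\mid_M y$ iff $y\in MxM$; $x,y$ are associated if each divides the other; proper divisor means divides but not associated. A unit-divisor divides $1_M$; otherwise it is a non-unit-divisor. An irreducible is a non-unit-divisor $a$ with $a\neq xy$ for all non-unit-divisors $x,y$ properly dividing $a$. A factorization of $x$ is a finite word over the irreducibles with product $x$. For words $\mathfrak a,\mathfrak b$, $\mathfrak a\sqsubseteq\mathfrak b$ means $\mathfrak a$ is, up to associatedness of letters, a subword (subsequence) of some permutation of $\mathfrak b$; equivalence means $\sqsubseteq$ both ways. A factorization $\mathfrak a$ of $x$ is minimal if no factorization $\mathfrak b$ of $x$ satisfies $\mathfrak b\sqsubseteq\mathfrak a\not\sqsubseteq\mathfrak b$. $M$ is UmF if every non-unit-divisor has a factorization and any two minimal factorizations of an element are equivalent. *)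

theory Defs
  imports "HOL-Algebra.Group" "HOL-Library.Multiset" "HOL-Library.Sublist"
begin

definition tdvd :: "('a, 'b) monoid_scheme \<Rightarrow> 'a \<Rightarrow> 'a \<Rightarrow> bool" where
  "tdvd M x y \<longleftrightarrow> x \<in> carrier M \<and> y \<in> carrier M \<and>
     (\<exists>u\<in>carrier M. \<exists>v\<in>carrier M. y = u \<otimes>\<^bsub>M\<^esub> x \<otimes>\<^bsub>M\<^esub> v)"

definition tassoc :: "('a, 'b) monoid_scheme \<Rightarrow> 'a \<Rightarrow> 'a \<Rightarrow> bool" where
  "tassoc M x y \<longleftrightarrow> tdvd M x y \<and> tdvd M y x"

definition proper_tdvd :: "('a, 'b) monoid_scheme \<Rightarrow> 'a \<Rightarrow> 'a \<Rightarrow> bool" where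
  "proper_tdvd M x y \<longleftrightarrow> tdvd M x y \<and> \<not> tassoc M x y"

definition unit_divisor :: "('a, 'b) monoid_scheme \<Rightarrow> 'a \<Rightarrow> bool" where
  "unit_divisor M x \<longleftrightarrow> tdvd M x \<one>\<^bsub>M\<^esub>"

definition non_unit_divisor :: "('a, 'b) monoid_scheme \<Rightarrow> 'a \<Rightarrow> bool" where
  "non_unit_divisor M x \<longleftrightarrow> x \<in> carrier M \<and> \<not> unit_divisor M x"

definition tirreducible :: "('a, 'b) monoid_scheme \<Rightarrow> 'a \<Rightarrow> bool" where
  "tirreducible M a \<longleftrightarrow> non_unit_divisor M a \<and>
     \<not> (\<exists>x y. non_unit_divisor M x \<and> non_unit_divisor M y \<and>
              proper_tdvd M x a \<and> proper_tdvd M y a \<and> a = x \<otimes>\<^bsub>M\<^esub> y)"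

definition word_prod :: "('a, 'b) monoid_scheme \<Rightarrow> 'a list \<Rightarrow> 'a" where
  "word_prod M xs = foldr (\<lambda>a b. a \<otimes>\<^bsub>M\<^esub> b) xs \<one>\<^bsub>M\<^esub>"

definition is_factorization :: "('a, 'b) monoid_scheme \<Rightarrow> 'a list \<Rightarrow> 'a \<Rightarrow> bool" where
  "is_factorization M xs x \<longleftrightarrow> (\<forall>a\<in>set xs. tirreducible M a) \<and> word_prod M xs = x"

definition word_le :: "('a, 'b) monoid_scheme \<Rightarrow> 'a list \<Rightarrow> 'a list \<Rightarrow> bool" where
  "word_le M as bs \<longleftrightarrow> (\<exists>bs'. mset bs' = mset bs \<and> list_emb (tassoc M) as bs')"

definition word_equiv :: "('a, 'b) monoid_scheme \<Rightarrow> 'a list \<Rightarrow> 'a list \<Rightarrow> bool" where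
  "word_equiv M as bs \<longleftrightarrow> word_le M as bs \<and> word_le M bs as"

definition minimal_factorization :: "('a, 'b) monoid_scheme \<Rightarrow> 'a list \<Rightarrow> 'a \<Rightarrow> bool" where
  "minimal_factorization M as x \<longleftrightarrow> is_factorization M as x \<and>
     \<not> (\<exists>bs. is_factorization M bs x \<and> word_le M bs as \<and> \<not> word_le M as bs)"

definition UmF :: "('a, 'b) monoid_scheme \<Rightarrow> bool" where
  "UmF M \<longleftrightarrow>
     (\<forall>x. non_unit_divisor M x \<longrightarrow> (\<exists>as. is_factorization M as x)) \<and>
     (\<forall>x\<in>carrier M. \<forall>as bs. minimal_factorization M as x \<and> minimal_factorization M bs x
        \<longrightarrow> word_equiv M as bs)"

definition breakable :: "('a, 'b) monoid_scheme \<Rightarrow> bool" where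
  "breakable H \<longleftrightarrow> monoid H \<and>
     (\<forall>x\<in>carrier H. \<forall>y\<in>carrier H. x \<otimes>\<^bsub>H\<^esub> y \<in> {x, y})"

definition Pfin1 :: "('a, 'b) monoid_scheme \<Rightarrow> 'a set monoid" where
  "Pfin1 H = \<lparr> carrier = {X. X \<subseteq> carrier H \<and> finite X \<and> X \<noteq> {} \<and> \<one>\<^bsub>H\<^esub> \<in> X},
               monoid.mult = (\<lambda>X Y. {x \<otimes>\<^bsub>H\<^esub> y | x y. x \<in> X \<and> y \<in> Y}),
               monoid.one = {\<one>\<^bsub>H\<^esub>} \<rparr>"

end

theory Submission
  imports Defs
begin

lemma P_carrier: "carrier (Pfin1 H) = {X. X \<subseteq> carrier H \<and> finite X \<and> X \<noteq> {} \<and> \<one>\<^bsub>H\<^esub> \<in> X}"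
  by (simp add: Pfin1_def)

lemma P_one: "\<one>\<^bsub>Pfin1 H\<^esub> = {\<one>\<^bsub>H\<^esub>}"
  by (simp add: Pfin1_def)

lemma P_mult:
  assumes br: "breakable H" and X: "X \<in> carrier (Pfin1 H)" and Y: "Y \<in> carrier (Pfin1 H)"
  shows "X \<otimes>\<^bsub>Pfin1 H\<^esub> Y = X \<union> Y"
proof -
  have m: "monoid H" using br breakable_def by auto
  have b: "\<And>x y. x \<in> carrier H \<Longrightarrow> y \<in> carrier H \<Longrightarrow> x \<otimes>\<^bsub>H\<^esub> y \<in> {x,y}"
    using br by (auto simp: breakable_def)
  have e: "X \<otimes>\<^bsub>Pfin1 H\<^esub> Y = {x \<otimes>\<^bsub>H\<^esub> y | x y. x \<in> X \<and> y \<in> Y}"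
    by (simp add: Pfin1_def)
  show ?thesis
  proof
    show "X \<otimes>\<^bsub>Pfin1 H\<^esub> Y \<subseteq> X \<union> Y"
    proof
      fix z assume "z \<in> X \<otimes>\<^bsub>Pfin1 H\<^esub> Y"
      then obtain x y where z: "z = x \<otimes>\<^bsub>H\<^esub> y" "x \<in> X" "y \<in> Y" using e by auto
      then have "x \<in> carrier H" "y \<in> carrier H" using X Y by (auto simp: P_carrier)
      then have "x \<otimes>\<^bsub>H\<^esub> y \<in> {x, y}" using b by blast
      then show "z \<in> X \<union> Y" using z by auto
    qed
    show "X \<union> Y \<subseteq> X \<otimes>\<^bsub>Pfin1 H\<^esub> Y"
    proof
      fix z assume z: "z \<in> X \<union> Y"
      have o: "\<one>\<^bsub>H\<^esub> \<in> X" "\<one>\<^bsub>H\<^esub> \<in> Y" using X Y by (auto simp: P_carrier)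
      have zc: "z \<in> carrier H" using z X Y by (auto simp: P_carrier)
      show "z \<in> X \<otimes>\<^bsub>Pfin1 H\<^esub> Y"
      proof (cases "z \<in> X")
        case True
        have "z = z \<otimes>\<^bsub>H\<^esub> \<one>\<^bsub>H\<^esub>" using m zc by (simp add: monoid.r_one)
        then show ?thesis using True o e by blast
      next
        case False
        then have "z \<in> Y" using z by auto
        moreover have "z = \<one>\<^bsub>H\<^esub> \<otimes>\<^bsub>H\<^esub> z" using m zc by (simp add: monoid.l_one)
        ultimately show ?thesis using o e by blast
      qed
    qed
  qed
qed

lemma P_un: "X \<in> carrier (Pfin1 H) \<Longrightarrow> Y \<in> carrier (Pfin1 H) \<Longrightarrow> X \<union> Y \<in> carrier (Pfin1 H)"
  by (auto simp: P_carrier)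

lemma P_onec: "breakable H \<Longrightarrow> {\<one>\<^bsub>H\<^esub>} \<in> carrier (Pfin1 H)"
  by (auto simp: P_carrier breakable_def monoid.one_closed)

lemma P_tdvd:
  assumes br: "breakable H"
  shows "tdvd (Pfin1 H) X Y \<longleftrightarrow> X \<in> carrier (Pfin1 H) \<and> Y \<in> carrier (Pfin1 H) \<and> X \<subseteq> Y"
proof
  assume "tdvd (Pfin1 H) X Y"
  then obtain u v where uv: "X \<in> carrier (Pfin1 H)" "Y \<in> carrier (Pfin1 H)" "u \<in> carrier (Pfin1 H)"
    "v \<in> carrier (Pfin1 H)" "Y = u \<otimes>\<^bsub>Pfin1 H\<^esub> X \<otimes>\<^bsub>Pfin1 H\<^esub> v"
    unfolding tdvd_def by blast
  then have "Y = u \<union> X \<union> v" using P_mult[OF br] P_un by metis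
  then show "X \<in> carrier (Pfin1 H) \<and> Y \<in> carrier (Pfin1 H) \<and> X \<subseteq> Y" using uv by auto
next
  assume a: "X \<in> carrier (Pfin1 H) \<and> Y \<in> carrier (Pfin1 H) \<and> X \<subseteq> Y"
  have o: "\<one>\<^bsub>H\<^esub> \<in> X" using a by (auto simp: P_carrier)
  have "{\<one>\<^bsub>H\<^esub>} \<otimes>\<^bsub>Pfin1 H\<^esub> X = X" using P_mult[OF br P_onec[OF br]] a o by auto
  moreover have "X \<otimes>\<^bsub>Pfin1 H\<^esub> Y = Y" using P_mult[OF br] a by auto
  ultimately have "Y = {\<one>\<^bsub>H\<^esub>} \<otimes>\<^bsub>Pfin1 H\<^esub> X \<otimes>\<^bsub>Pfin1 H\<^esub> Y" by simp
  then show "tdvd (Pfin1 H) X Y" unfolding tdvd_def using a P_onec[OF br] by blast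
qed

lemma P_tassoc:
  assumes br: "breakable H"
  shows "tassoc (Pfin1 H) X Y \<longleftrightarrow> X \<in> carrier (Pfin1 H) \<and> Y \<in> carrier (Pfin1 H) \<and> X = Y"
  unfolding tassoc_def P_tdvd[OF br] by auto

lemma P_nud:
  assumes br: "breakable H"
  shows "non_unit_divisor (Pfin1 H) X \<longleftrightarrow> X \<in> carrier (Pfin1 H) \<and> X \<noteq> {\<one>\<^bsub>H\<^esub>}"
  unfolding non_unit_divisor_def unit_divisor_def P_tdvd[OF br] P_one
  using P_onec[OF br] by (auto simp: P_carrier)

lemma P_irr:
  assumes br: "breakable H"
  shows "tirreducible (Pfin1 H) A \<longleftrightarrow> (\<exists>a\<in>carrier H. a \<noteq> \<one>\<^bsub>H\<^esub> \<and> A = {\<one>\<^bsub>H\<^esub>, a})"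
proof
  assume t: "tirreducible (Pfin1 H) A"
  then have A: "A \<in> carrier (Pfin1 H)" "A \<noteq> {\<one>\<^bsub>H\<^esub>}"
    and no: "\<not> (\<exists>x y. non_unit_divisor (Pfin1 H) x \<and> non_unit_divisor (Pfin1 H) y \<and>
              proper_tdvd (Pfin1 H) x A \<and> proper_tdvd (Pfin1 H) y A \<and> A = x \<otimes>\<^bsub>Pfin1 H\<^esub> y)"
    unfolding tirreducible_def P_nud[OF br] by auto
  have o: "\<one>\<^bsub>H\<^esub> \<in> A" "A \<subseteq> carrier H" "finite A" using A by (auto simp: P_carrier)
  then obtain a where a: "a \<in> A" "a \<noteq> \<one>\<^bsub>H\<^esub>" using A by blast
  show "\<exists>a\<in>carrier H. a \<noteq> \<one>\<^bsub>H\<^esub> \<and> A = {\<one>\<^bsub>H\<^esub>, a}"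
  proof (cases "A = {\<one>\<^bsub>H\<^esub>, a}")
    case True then show ?thesis using a o by auto
  next
    case False
    then obtain b where b: "b \<in> A" "b \<noteq> \<one>\<^bsub>H\<^esub>" "b \<noteq> a" using o a by blast
    define x where "x = {\<one>\<^bsub>H\<^esub>, a}"
    define y where "y = A - {a}"
    have xc: "x \<in> carrier (Pfin1 H)" using o a unfolding x_def by (auto simp: P_carrier)
    have yc: "y \<in> carrier (Pfin1 H)" using o a unfolding y_def by (auto simp: P_carrier)
    have "non_unit_divisor (Pfin1 H) x" using xc a unfolding P_nud[OF br] x_def by auto
    moreover have "non_unit_divisor (Pfin1 H) y" using yc b unfolding P_nud[OF br] y_def by auto
    moreover have "proper_tdvd (Pfin1 H) x A" unfolding proper_tdvd_def P_tassoc[OF br] P_tdvd[OF br]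
      using xc A o a b unfolding x_def by auto
    moreover have "proper_tdvd (Pfin1 H) y A" unfolding proper_tdvd_def P_tassoc[OF br] P_tdvd[OF br]
      using yc A o a b unfolding y_def by auto
    moreover have "A = x \<otimes>\<^bsub>Pfin1 H\<^esub> y" using P_mult[OF br xc yc] a o unfolding x_def y_def by auto
    ultimately show ?thesis using no by blast
  qed
next
  assume "\<exists>a\<in>carrier H. a \<noteq> \<one>\<^bsub>H\<^esub> \<and> A = {\<one>\<^bsub>H\<^esub>, a}"
  then obtain a where a: "a \<in> carrier H" "a \<noteq> \<one>\<^bsub>H\<^esub>" "A = {\<one>\<^bsub>H\<^esub>, a}" by blast
  have Ac: "A \<in> carrier (Pfin1 H)" using a br by (auto simp: P_carrier breakable_def monoid.one_closed)
  have key: "\<And>x. x \<in> carrier (Pfin1 H) \<Longrightarrow> x \<subseteq> A \<Longrightarrow> x \<noteq> {\<one>\<^bsub>H\<^esub>} \<Longrightarrow> x = A"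
  proof -
    fix x assume x: "x \<in> carrier (Pfin1 H)" "x \<subseteq> A" "x \<noteq> {\<one>\<^bsub>H\<^esub>}"
    have "\<one>\<^bsub>H\<^esub> \<in> x" using x by (auto simp: P_carrier)
    then show "x = A" using x a by blast
  qed
  have "A \<noteq> {\<one>\<^bsub>H\<^esub>}" using a by auto
  then show "tirreducible (Pfin1 H) A"
    unfolding tirreducible_def P_nud[OF br] proper_tdvd_def P_tassoc[OF br] P_tdvd[OF br]
    using Ac key by blast
qed

lemma P_wp:
  assumes br: "breakable H" and s: "set xs \<subseteq> carrier (Pfin1 H)"
  shows "word_prod (Pfin1 H) xs = insert \<one>\<^bsub>H\<^esub> (\<Union> (set xs)) \<and> word_prod (Pfin1 H) xs \<in> carrier (Pfin1 H)"
  using s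
proof (induction xs)
  case Nil
  then show ?case using P_onec[OF br] by (simp add: word_prod_def P_one)
next
  case (Cons a xs)
  have e: "word_prod (Pfin1 H) (a # xs) = a \<otimes>\<^bsub>Pfin1 H\<^esub> word_prod (Pfin1 H) xs"
    by (simp add: word_prod_def)
  have ac: "a \<in> carrier (Pfin1 H)" using Cons by auto
  have IH: "word_prod (Pfin1 H) xs = insert \<one>\<^bsub>H\<^esub> (\<Union> (set xs))"
     "word_prod (Pfin1 H) xs \<in> carrier (Pfin1 H)" using Cons by auto
  have "word_prod (Pfin1 H) (a # xs) = a \<union> word_prod (Pfin1 H) xs"
    using e P_mult[OF br ac IH(2)] by simp
  then show ?case using IH P_un[OF ac IH(2)] by auto
qed

lemma emb_mset: "list_emb (=) xs ys \<Longrightarrow> mset xs \<subseteq># mset ys"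
proof (induction rule: list_emb.induct)
  case (list_emb_Nil ys) then show ?case by simp
next
  case (list_emb_Cons xs ys y) then show ?case using subset_mset.order_trans by fastforce
next
  case (list_emb_Cons2 x y xs ys) then show ?case by simp
qed

lemma P_wle:
  assumes br: "breakable H" and s: "set as \<subseteq> carrier (Pfin1 H)"
  shows "word_le (Pfin1 H) as bs \<longleftrightarrow> mset as \<subseteq># mset bs"
proof
  assume "word_le (Pfin1 H) as bs"
  then obtain bs' where b: "mset bs' = mset bs" "list_emb (tassoc (Pfin1 H)) as bs'"
    unfolding word_le_def by blast
  have "list_emb (=) as bs'" using list_emb_mono[of "tassoc (Pfin1 H)" "(=)"] b(2)
    P_tassoc[OF br] by blast
  then show "mset as \<subseteq># mset bs" using emb_mset b(1) by metis
next
  assume a: "mset as \<subseteq># mset bs"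
  obtain ys where ys: "mset ys = mset bs - mset as" using ex_mset by blast
  have "mset (ys @ as) = mset bs" using ys a by (simp add: subset_mset.diff_add)
  moreover have "list_emb (tassoc (Pfin1 H)) as (ys @ as)"
    using list_emb_refl[of as "tassoc (Pfin1 H)"] s P_tassoc[OF br] by blast
  ultimately show "word_le (Pfin1 H) as bs" unfolding word_le_def by blast
qed

lemma irr_c: "breakable H \<Longrightarrow> tirreducible (Pfin1 H) A \<Longrightarrow> A \<in> carrier (Pfin1 H)"
  by (simp add: tirreducible_def non_unit_divisor_def)

lemma fact_set:
  assumes br: "breakable H" and f: "is_factorization (Pfin1 H) as X"
  shows "set as = {A. tirreducible (Pfin1 H) A \<and> A \<subseteq> X}"
proof -
  have irr: "\<forall>A\<in>set as. tirreducible (Pfin1 H) A" using f by (simp add: is_factorization_def)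
  then have s: "set as \<subseteq> carrier (Pfin1 H)" using irr_c[OF br] by blast
  have X: "X = insert \<one>\<^bsub>H\<^esub> (\<Union> (set as))" using f P_wp[OF br s] by (simp add: is_factorization_def)
  show ?thesis
  proof
    show "set as \<subseteq> {A. tirreducible (Pfin1 H) A \<and> A \<subseteq> X}" using irr X by auto
    show "{A. tirreducible (Pfin1 H) A \<and> A \<subseteq> X} \<subseteq> set as"
    proof
      fix A assume "A \<in> {A. tirreducible (Pfin1 H) A \<and> A \<subseteq> X}"
      then obtain a where a: "a \<noteq> \<one>\<^bsub>H\<^esub>" "A = {\<one>\<^bsub>H\<^esub>, a}" "A \<subseteq> X"
        using P_irr[OF br] by blast
      then obtain B where B: "B \<in> set as" "a \<in> B" using X by auto
      then obtain b where "b \<noteq> \<one>\<^bsub>H\<^esub>" "B = {\<one>\<^bsub>H\<^esub>, b}" using irr P_irr[OF br] by blast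
      then have "B = A" using a B by auto
      then show "A \<in> set as" using B by simp
    qed
  qed
qed

lemma min_distinct:
  assumes br: "breakable H" and m: "minimal_factorization (Pfin1 H) as X"
  shows "distinct as"
proof (rule ccontr)
  assume nd: "\<not> distinct as"
  have f: "is_factorization (Pfin1 H) as X" using m by (simp add: minimal_factorization_def)
  have irr: "\<forall>A\<in>set as. tirreducible (Pfin1 H) A" using f by (simp add: is_factorization_def)
  then have s: "set as \<subseteq> carrier (Pfin1 H)" using irr_c[OF br] by blast
  let ?bs = "remdups as"
  have s2: "set ?bs \<subseteq> carrier (Pfin1 H)" using s by simp
  have "word_prod (Pfin1 H) ?bs = X" using f P_wp[OF br s] P_wp[OF br s2]
    by (simp add: is_factorization_def)
  then have fb: "is_factorization (Pfin1 H) ?bs X" using irr by (simp add: is_factorization_def)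
  have "mset ?bs \<subseteq># mset as" by (simp add: mset_remdups_subset_eq)
  then have l1: "word_le (Pfin1 H) ?bs as" using P_wle[OF br s2] by blast
  have "\<not> mset as \<subseteq># mset ?bs"
  proof
    assume "mset as \<subseteq># mset ?bs"
    then have "length as \<le> length ?bs" using size_mset_mono by fastforce
    moreover have "length ?bs < length as" using nd
      by (metis distinct_remdups length_remdups_card_conv card_length le_neq_implies_less remdups_id_iff_distinct length_remdups_eq)
    ultimately show False by simp
  qed
  then have "\<not> word_le (Pfin1 H) as ?bs" using P_wle[OF br s] by blast
  then show False using m fb l1 unfolding minimal_factorization_def by blast
qed

theorem proposition4p7:
  fixes H :: "('a, 'b) monoid_scheme"
  assumes "breakable H"
  shows "UmF (Pfin1 H)"
  unfolding UmF_def
proof (intro conjI allI impI ballI)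
  note br = assms
  fix X assume "non_unit_divisor (Pfin1 H) X"
  then have X: "X \<in> carrier (Pfin1 H)" "X \<noteq> {\<one>\<^bsub>H\<^esub>}" using P_nud[OF br] by auto
  have fin: "finite (X - {\<one>\<^bsub>H\<^esub>})" using X by (auto simp: P_carrier)
  obtain xs where xs: "set xs = X - {\<one>\<^bsub>H\<^esub>}" using finite_list[OF fin] by blast
  define as where "as = map (\<lambda>a. {\<one>\<^bsub>H\<^esub>, a}) xs"
  have Xc: "X \<subseteq> carrier H" "\<one>\<^bsub>H\<^esub> \<in> X" using X by (auto simp: P_carrier)
  have irr: "\<forall>A\<in>set as. tirreducible (Pfin1 H) A"
    unfolding as_def P_irr[OF br] using xs Xc by auto
  then have s: "set as \<subseteq> carrier (Pfin1 H)" using irr_c[OF br] by blast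
  have "word_prod (Pfin1 H) as = X" using P_wp[OF br s] xs Xc unfolding as_def by auto
  then show "\<exists>as. is_factorization (Pfin1 H) as X" using irr unfolding is_factorization_def by blast
next
  note br = assms
  fix X as bs
  assume "X \<in> carrier (Pfin1 H)" and
    m: "minimal_factorization (Pfin1 H) as X \<and> minimal_factorization (Pfin1 H) bs X"
  have d: "distinct as" "distinct bs" using m min_distinct[OF br] by auto
  have "set as = set bs" using m fact_set[OF br] unfolding minimal_factorization_def by blast
  then have e: "mset as = mset bs" using d set_eq_iff_mset_eq_distinct by blast
  have sa: "set as \<subseteq> carrier (Pfin1 H)" "set bs \<subseteq> carrier (Pfin1 H)"
    using m irr_c[OF br] unfolding minimal_factorization_def is_factorization_def by blast+
  show "word_equiv (Pfin1 H) as bs" unfolding word_equiv_def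
    using P_wle[OF br sa(1)] P_wle[OF br sa(2)] e by simp
qed

end
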